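(* Fix an integer $k\ge 2$ (the alphabet size). Say that $[a,b]_n$ is realizable over the $k$-letter alphabet if there is a marking of the $n$-dimensional $k$-ary hypercube in which every vertex is marked exactly $a$ times or exactly $b$ times. Then: (a) if $[a,b]_n$ is realizable, then $[a+1,b+1]_{n+k}$ is realizable; (b) if $[a,b]_n$ is realizable, then $[\ell a,\ell b]_{\ell n}$ is realizable for every positive integer $\ell$.
   Context: The $n$-dimensional $k$-ary hypercube has vertex set $\{0,1,\dots,k-1\}^n$. Its "edges" (lines) are the $nk^{n-1}$ sets of $k$ vertices obtained by fixing all coordinates except one coordinate $i$ and letting coordinate $i$ range over all $k$ values. A marking chooses, for each line, one vertex of that line; the number of times a vertex is marked is the number of lines for which it is the chosen vertex. (For $k=2$ this is an orientation of the $n$-cube, marking the head of each edge, and the mark count is the in-degree.) *)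

theory Defs
  imports Main
begin

text \<open>Vertices of the n-dimensional k-ary hypercube: functions v with v i < k for i < n,
  and v i = 0 for i >= n (canonical extensional representation of \<open>{0..k-1}^n\<close>).\<close>
definition hcube :: "nat \<Rightarrow> nat \<Rightarrow> (nat \<Rightarrow> nat) set" where
  "hcube k n = {v. (\<forall>i<n. v i < k) \<and> (\<forall>i\<ge>n. v i = 0)}"

text \<open>A line is named by its free coordinate i < n and a base vertex w with w i = 0;
  there are exactly n * k^(n-1) of them.\<close>
definition hlines :: "nat \<Rightarrow> nat \<Rightarrow> (nat \<times> (nat \<Rightarrow> nat)) set" where
  "hlines k n = {(i, w). i < n \<and> w \<in> hcube k n \<and> w i = 0}"

definition line_pts :: "nat \<Rightarrow> nat \<times> (nat \<Rightarrow> nat) \<Rightarrow> (nat \<Rightarrow> nat) set" where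
  "line_pts k L = {(snd L)(fst L := j) | j. j < k}"

definition is_marking :: "nat \<Rightarrow> nat \<Rightarrow> (nat \<times> (nat \<Rightarrow> nat) \<Rightarrow> (nat \<Rightarrow> nat)) \<Rightarrow> bool" where
  "is_marking k n m \<longleftrightarrow> (\<forall>L \<in> hlines k n. m L \<in> line_pts k L)"

definition mark_count :: "nat \<Rightarrow> nat \<Rightarrow> (nat \<times> (nat \<Rightarrow> nat) \<Rightarrow> (nat \<Rightarrow> nat)) \<Rightarrow> (nat \<Rightarrow> nat) \<Rightarrow> nat" where
  "mark_count k n m v = card {L \<in> hlines k n. m L = v}"

definition realizable :: "nat \<Rightarrow> nat \<Rightarrow> nat \<Rightarrow> nat \<Rightarrow> bool" where
  "realizable k n a b \<longleftrightarrow>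
     (\<exists>m. is_marking k n m \<and>
          (\<forall>v \<in> hcube k n. mark_count k n m v = a \<or> mark_count k n m v = b))"

end

theory Submission
  imports Defs
begin

definition cnt :: "(nat \<Rightarrow> (nat\<Rightarrow>nat) \<Rightarrow> nat) \<Rightarrow> nat \<Rightarrow> (nat\<Rightarrow>nat) \<Rightarrow> nat" where
  "cnt g n v = card {i. i<n \<and> g i (v(i:=0)) = v i}"

lemma mc_key:
  assumes m: "is_marking k n m" and v: "v \<in> hcube k n"
  shows "mark_count k n m v = card {i. i<n \<and> m (i, v(i:=0)) = v}"
proof -
  have "bij_betw fst {L\<in>hlines k n. m L = v} {i. i<n \<and> m (i, v(i:=0)) = v}"
  proof (rule bij_betw_imageI)
    have A: "L = (fst L, v(fst L:=0))" if H: "L \<in> hlines k n" "m L = v" for L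
    proof -
      obtain i w where L: "L = (i,w)" by force
      from H m L have "m L \<in> line_pts k L" "w i = 0" by (auto simp: is_marking_def hlines_def)
      then obtain j where "v = w(i:=j)" using H(2) L by (auto simp: line_pts_def)
      with \<open>w i = 0\<close> have "w = v(i:=0)" by auto
      thus ?thesis using L by simp
    qed
    show "inj_on fst {L\<in>hlines k n. m L = v}"
    proof (rule inj_onI)
      fix L L' assume "L \<in> {L\<in>hlines k n. m L = v}" "L' \<in> {L\<in>hlines k n. m L = v}" "fst L = fst L'"
      thus "L = L'" using A[of L] A[of L'] by simp
    qed
    show "fst ` {L\<in>hlines k n. m L = v} = {i. i<n \<and> m (i, v(i:=0)) = v}"
    proof
      show "fst ` {L\<in>hlines k n. m L = v} \<subseteq> {i. i<n \<and> m (i, v(i:=0)) = v}"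
        using A by (force simp: hlines_def)
      show "{i. i<n \<and> m (i, v(i:=0)) = v} \<subseteq> fst ` {L\<in>hlines k n. m L = v}"
      proof
        fix i assume "i \<in> {i. i<n \<and> m (i, v(i:=0)) = v}"
        hence "(i, v(i:=0)) \<in> {L\<in>hlines k n. m L = v}" using v
          by (auto simp: hlines_def hcube_def)
        thus "i \<in> fst ` {L\<in>hlines k n. m L = v}" by force
      qed
    qed
  qed
  thus ?thesis unfolding mark_count_def by (rule bij_betw_same_card)
qed

lemma R1:
  assumes "realizable k n a b" and k: "k > 0"
  shows "\<exists>g. (\<forall>i w. g i w < k) \<and> (\<forall>v\<in>hcube k n. cnt g n v = a \<or> cnt g n v = b)"
proof -
  obtain m where m: "is_marking k n m"
    and c: "\<forall>v \<in> hcube k n. mark_count k n m v = a \<or> mark_count k n m v = b"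
    using assms by (auto simp: realizable_def)
  define g where "g i w = (m (i,w)) i mod k" for i w
  have "cnt g n v = mark_count k n m v" if v: "v \<in> hcube k n" for v
  proof -
    have "{i. i<n \<and> g i (v(i:=0)) = v i} = {i. i<n \<and> m (i, v(i:=0)) = v}"
    proof (intro Collect_cong conj_cong refl)
      fix i assume i: "i < n"
      hence "(i, v(i:=0)) \<in> hlines k n" using v by (auto simp: hlines_def hcube_def)
      with m obtain j where j: "j<k" "m (i, v(i:=0)) = v(i:=j)"
        by (auto simp: is_marking_def line_pts_def)
      show "(g i (v(i:=0)) = v i) = (m (i, v(i:=0)) = v)"
        using j by (auto simp: g_def fun_upd_idem_iff)
    qed
    thus ?thesis using mc_key[OF m v] by (simp add: cnt_def)
  qed
  moreover have "\<forall>i w. g i w < k" using k by (simp add: g_def)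
  ultimately show ?thesis using c by metis
qed

lemma R2:
  assumes g: "\<forall>i w. g i w < k"
    and c: "\<forall>v\<in>hcube k n. cnt g n v = a \<or> cnt g n v = b"
  shows "realizable k n a b"
proof -
  define m where "m L = (snd L)(fst L := g (fst L) (snd L))" for L
  have m: "is_marking k n m" using g by (auto simp: is_marking_def m_def line_pts_def)
  have "mark_count k n m v = cnt g n v" if v: "v \<in> hcube k n" for v
  proof -
    have "{i. i<n \<and> m (i, v(i:=0)) = v} = {i. i<n \<and> g i (v(i:=0)) = v i}"
      by (auto simp: m_def fun_upd_idem_iff)
    thus ?thesis using mc_key[OF m v] by (simp add: cnt_def)
  qed
  thus ?thesis unfolding realizable_def using m c by (intro exI[of _ m]) auto
qed

lemma add_mod_cancel: "((x::nat) + T) mod k = (y + T) mod k \<longleftrightarrow> x mod k = y mod k"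
  using nat_mod_eq_iff by auto

lemma modkey:
  fixes k x G T :: nat
  assumes "0<k" "x<k" "G<k"
  shows "(x = (G + (k-1)*T) mod k) \<longleftrightarrow> ((x+T) mod k = G)"
proof -
  have e: "G + (k-1)*T + T = G + k*T" using assms(1) by (cases k) auto
  have "(x = (G + (k-1)*T) mod k) \<longleftrightarrow> x mod k = (G + (k-1)*T) mod k" using assms by simp
  also have "\<dots> \<longleftrightarrow> (x + T) mod k = (G + (k-1)*T + T) mod k"
    by (rule add_mod_cancel[symmetric])
  also have "(G + (k-1)*T + T) mod k = G" unfolding e using assms by simp
  hence "((x + T) mod k = (G + (k-1)*T + T) mod k) \<longleftrightarrow> (x + T) mod k = G" by simp
  finally show ?thesis .
qed

lemma sum_upd_a:
  fixes v :: "nat \<Rightarrow> nat" and i n k :: nat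
  assumes "n \<le> i" "i < n+k"
  shows "(\<Sum>j<k. v (n+j)) = (\<Sum>j<k. (v(i:=0)) (n+j)) + v i"
proof -
  have "(\<Sum>j<k. v (n+j)) = (\<Sum>j<k. (v(i:=0)) (n+j) + (if j = i-n then v i else 0))"
    using assms by (intro sum.cong) auto
  also have "\<dots> = (\<Sum>j<k. (v(i:=0)) (n+j)) + v i"
  proof -
    have "i - n < k" using assms by simp
    thus ?thesis by (simp add: sum.distrib)
  qed
  finally show ?thesis .
qed

lemma part_a:
  assumes k: "k > 0" and r: "realizable k n a b"
  shows "realizable k (n + k) (a + 1) (b + 1)"
proof -
  obtain g where g: "\<forall>i w. g i w < k" and c: "\<forall>v\<in>hcube k n. cnt g n v = a \<or> cnt g n v = b"
    using R1[OF r k] by blast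
  define tr where "tr w = (\<lambda>j. if j<n then w j else 0)" for w :: "nat \<Rightarrow> nat"
  define S where "S w = (\<Sum>j<k. w (n+j))" for w :: "nat \<Rightarrow> nat"
  define g' where "g' i w = (if i < n then g i (tr w) else (i - n + (k-1) * S w) mod k)" for i w
  have g': "\<forall>i w. g' i w < k" using g k by (simp add: g'_def)
  have "cnt g' (n+k) v = cnt g n (tr v) + 1" if v: "v \<in> hcube k (n+k)" for v
  proof -
    have trv: "tr v \<in> hcube k n" using v by (auto simp: hcube_def tr_def)
    have "{i. i<n+k \<and> g' i (v(i:=0)) = v i} =
       {i. i<n \<and> g i ((tr v)(i:=0)) = tr v i} \<union> {n + S v mod k}"
    proof (intro set_eqI iffI)
      fix i assume "i \<in> {i. i<n+k \<and> g' i (v(i:=0)) = v i}"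
      hence i: "i < n+k" and e: "g' i (v(i:=0)) = v i" by auto
      show "i \<in> {i. i<n \<and> g i ((tr v)(i:=0)) = tr v i} \<union> {n + S v mod k}"
      proof (cases "i < n")
        case True
        have "tr (v(i:=0)) = (tr v)(i:=0)" by (auto simp: tr_def)
        thus ?thesis using True e by (simp add: g'_def tr_def)
      next
        case False
        have vi: "v i < k" using v i by (auto simp: hcube_def)
        have "v i = (i - n + (k-1) * S (v(i:=0))) mod k" using e False by (simp add: g'_def)
        moreover have G: "i - n < k" using i False by simp
        ultimately have "(v i + S (v(i:=0))) mod k = i - n" using modkey[OF k vi G, of "S (v(i:=0))"] by blast
        moreover have "S v = S (v(i:=0)) + v i" unfolding S_def using False i by (intro sum_upd_a) auto
        ultimately have "S v mod k = i - n" by (simp add: add.commute)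
        thus ?thesis using False by auto
      qed
    next
      fix i assume "i \<in> {i. i<n \<and> g i ((tr v)(i:=0)) = tr v i} \<union> {n + S v mod k}"
      thus "i \<in> {i. i<n+k \<and> g' i (v(i:=0)) = v i}"
      proof
        assume "i \<in> {i. i<n \<and> g i ((tr v)(i:=0)) = tr v i}"
        moreover have "tr (v(i:=0)) = (tr v)(i:=0)" by (auto simp: tr_def)
        ultimately show ?thesis by (simp add: g'_def tr_def)
      next
        assume "i \<in> {n + S v mod k}"
        hence iv: "i = n + S v mod k" by simp
        have i: "i < n + k" "\<not> i < n" using iv k by auto
        have vi: "v i < k" using v i by (auto simp: hcube_def)
        have "S v = S (v(i:=0)) + v i" unfolding S_def using i by (intro sum_upd_a) auto
        hence "(v i + S (v(i:=0))) mod k = i - n" using iv by (simp add: add.commute)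
        moreover have G: "i - n < k" using i by simp
        ultimately have "v i = (i - n + (k-1) * S (v(i:=0))) mod k" using modkey[OF k vi G, of "S (v(i:=0))"] by blast
        thus ?thesis using i by (simp add: g'_def)
      qed
    qed
    moreover have "n + S v mod k \<notin> {i. i<n \<and> g i ((tr v)(i:=0)) = tr v i}" by simp
    ultimately show ?thesis by (simp add: cnt_def)
  qed
  moreover have "tr v \<in> hcube k n" if "v \<in> hcube k (n+k)" for v
    using that by (auto simp: hcube_def tr_def)
  ultimately have "\<forall>v\<in>hcube k (n+k). cnt g' (n+k) v = a+1 \<or> cnt g' (n+k) v = b+1"
    using c by fastforce
  thus ?thesis using R2[OF g'] by blast
qed

lemma card_blocks:
  "card {d. d < l*n \<and> Q (d mod n)} = l * card {i. i<n \<and> Q i}"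
proof (induction l)
  case 0 thus ?case by simp
next
  case (Suc l)
  have "{d. d < Suc l*n \<and> Q (d mod n)} = {d. d < l*n \<and> Q (d mod n)} \<union> (\<lambda>i. l*n+i) ` {i. i<n \<and> Q i}"
  proof (intro set_eqI iffI)
    fix d assume d: "d \<in> {d. d < Suc l*n \<and> Q (d mod n)}"
    show "d \<in> {d. d < l*n \<and> Q (d mod n)} \<union> (\<lambda>i. l*n+i) ` {i. i<n \<and> Q i}"
    proof (cases "d < l*n")
      case True thus ?thesis using d by simp
    next
      case False
      then obtain i where i: "d = l*n + i" by (metis le_iff_add not_less)
      hence "i < n" using d by simp
      hence "d mod n = i" using i by simp
      thus ?thesis using d i \<open>i<n\<close> by auto
    qed
  next
    fix d assume "d \<in> {d. d < l*n \<and> Q (d mod n)} \<union> (\<lambda>i. l*n+i) ` {i. i<n \<and> Q i}"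
    thus "d \<in> {d. d < Suc l*n \<and> Q (d mod n)}" by auto
  qed
  moreover have "card ((\<lambda>i. l*n+i) ` {i. i<n \<and> Q i}) = card {i. i<n \<and> Q i}"
    by (rule card_image) (simp add: inj_on_def)
  moreover have "{d. d < l*n \<and> Q (d mod n)} \<inter> (\<lambda>i. l*n+i) ` {i. i<n \<and> Q i} = {}" by auto
  ultimately show ?case using Suc by (simp add: card_Un_disjoint)
qed

lemma sum_upd_b:
  fixes v :: "nat \<Rightarrow> nat"
  assumes "i < n" "j < l"
  shows "(\<Sum>j'<l. v (j'*n+i)) = (\<Sum>j'<l. (v(j*n+i:=0)) (j'*n+i)) + v (j*n+i)"
proof -
  have "(\<Sum>j'<l. v (j'*n+i)) = (\<Sum>j'<l. (v(j*n+i:=0)) (j'*n+i) + (if j' = j then v (j*n+i) else 0))"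
    using assms by (intro sum.cong) auto
  also have "\<dots> = (\<Sum>j'<l. (v(j*n+i:=0)) (j'*n+i)) + v (j*n+i)"
    using assms by (simp add: sum.distrib)
  finally show ?thesis .
qed

lemma part_b:
  assumes k: "k > 0" and r: "realizable k n a b"
  shows "realizable k (l * n) (l * a) (l * b)"
proof -
  obtain g where g: "\<forall>i w. g i w < k" and c: "\<forall>v\<in>hcube k n. cnt g n v = a \<or> cnt g n v = b"
    using R1[OF r k] by blast
  define F where "F w i = (\<Sum>j<l. w (j*n+i))" for w :: "nat \<Rightarrow> nat" and i
  define P where "P w = (\<lambda>i. if i<n then F w i mod k else 0)" for w
  define g' where "g' d w = (g (d mod n) ((P w)(d mod n := 0)) + (k-1) * F w (d mod n)) mod k" for d w
  have g': "\<forall>i w. g' i w < k" using k by (simp add: g'_def)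
  have Pv: "P v \<in> hcube k n" for v using k by (auto simp: hcube_def P_def)
  have "cnt g' (l*n) v = l * cnt g n (P v)" if v: "v \<in> hcube k (l*n)" for v
  proof -
    have "{d. d < l*n \<and> g' d (v(d:=0)) = v d} = {d. d < l*n \<and> (g (d mod n) ((P v)(d mod n:=0)) = P v (d mod n))}"
    proof (intro Collect_cong conj_cong refl)
      fix d assume d: "d < l*n"
      define i where "i = d mod n"
      define j where "j = d div n"
      have n: "n > 0" using d by (cases n) auto
      have i: "i < n" using n by (simp add: i_def)
      have j: "j < l" using d n unfolding j_def by (simp add: div_less_iff_less_mult mult.commute)
      have dji: "d = j*n + i" unfolding i_def j_def by simp
      have vd: "v d < k" using v d by (auto simp: hcube_def)
      have PP: "(P (v(d:=0)))(i:=0) = (P v)(i:=0)"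
      proof
        fix i' show "((P (v(d:=0)))(i:=0)) i' = ((P v)(i:=0)) i'"
        proof (cases "i' = i \<or> \<not> i' < n")
          case True thus ?thesis by (auto simp: P_def)
        next
          case False
          have "F (v(d:=0)) i' = F v i'" unfolding F_def
          proof (intro sum.cong refl)
            fix j' have "j'*n+i' \<noteq> d"
            proof
              assume "j'*n+i' = d"
              hence "(j'*n+i') mod n = i" by (simp add: i_def)
              thus False using False by simp
            qed
            thus "(v(d:=0)) (j'*n+i') = v (j'*n+i')" by simp
          qed
          thus ?thesis using False by (simp add: P_def)
        qed
      qed
      have G: "g i ((P v)(i:=0)) < k" using g by blast
      have FF: "F v i = F (v(d:=0)) i + v d" unfolding F_def dji using i j by (rule sum_upd_b)
      have "g' d (v(d:=0)) = v d \<longleftrightarrow> v d = (g i ((P v)(i:=0)) + (k-1) * F (v(d:=0)) i) mod k"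
        unfolding g'_def i_def[symmetric] PP by auto
      also have "\<dots> \<longleftrightarrow> (v d + F (v(d:=0)) i) mod k = g i ((P v)(i:=0))"
        by (rule modkey[OF k vd G])
      also have "\<dots> \<longleftrightarrow> g i ((P v)(i:=0)) = P v i" using FF i by (auto simp: P_def add.commute)
      finally show "(g' d (v(d:=0)) = v d) = (g (d mod n) ((P v)(d mod n:=0)) = P v (d mod n))"
        by (simp add: i_def)
    qed
    thus ?thesis unfolding cnt_def
      using card_blocks[of l n "\<lambda>i. g i ((P v)(i:=0)) = P v i"] by simp
  qed
  hence "\<forall>v\<in>hcube k (l*n). cnt g' (l*n) v = l*a \<or> cnt g' (l*n) v = l*b"
    using c Pv by fastforce
  thus ?thesis using R2[OF g'] by blast
qed

theorem theorem5:
  fixes k n a b :: nat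
  assumes "k \<ge> 2"
  shows "(realizable k n a b \<longrightarrow> realizable k (n + k) (a + 1) (b + 1))
     \<and> (\<forall>l::nat. l > 0 \<longrightarrow> realizable k n a b \<longrightarrow> realizable k (l * n) (l * a) (l * b))"
  using assms part_a part_b by auto

end
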